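(* For all integers $n\ge 2$ and $1\le k<n$, the graph $H_B(n,k)$ is connected and its circuit rank (cyclomatic number $|E|-|V|+1$) equals $$\binom{n}{k}\left(\sum_{s=1}^{k}2^{s-1}\binom{k}{s}-1+\sum_{t=1}^{n-k}2^{k+t-1}\binom{n-k}{t}\right)-\sum_{i=1}^n 2^{i-1}\binom{n}{i}+1.$$
   Context: Fix integers $n\ge 2$ and $1\le k<n$ and positive real numbers $x_1<x_2<\dots<x_n$. Let $\mathscr{B}_n=\{\pm x_1,\pm x_2,\dots,\pm x_{n-1},x_n\}$ (so $-x_n\notin\mathscr{B}_n$). Let $\phi(\mathscr{B}_n)$ be the family of all nonempty subsets $S\subseteq\mathscr{B}_n$ whose elements have pairwise distinct absolute values and whose element of largest absolute value is positive. Let $\mathscr{B}_n^+=\{x_1,\dots,x_n\}$, let $V_1$ be the set of all $k$-element subsets of $\mathscr{B}_n^+$, and let $V_2=\phi(\mathscr{B}_n)\setminus V_1$. For $A\in\phi(\mathscr{B}_n)$ put $A^\dagger=\{|a|:a\in A\}$. The bipartite Kneser B type-$k$ graph $H_B(n,k)$ is the simple graph with vertex set $V_1\cup V_2$ in which $X\in V_1$ and $Y\in V_2$ are adjacent if and only if $X\subseteq Y^\dagger$ or $Y^\dagger\subseteq X$, and there are no other edges. *)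

theory Defs
  imports Complex_Main
begin

definition B_set :: "(nat \<Rightarrow> real) \<Rightarrow> nat \<Rightarrow> real set" where
  "B_set x n = {x i | i. 1 \<le> i \<and> i \<le> n} \<union> {- x i | i. 1 \<le> i \<and> i < n}"

definition B_pos :: "(nat \<Rightarrow> real) \<Rightarrow> nat \<Rightarrow> real set" where
  "B_pos x n = {x i | i. 1 \<le> i \<and> i \<le> n}"

definition phi_B :: "(nat \<Rightarrow> real) \<Rightarrow> nat \<Rightarrow> real set set" where
  "phi_B x n = {S. S \<subseteq> B_set x n \<and> S \<noteq> {} \<and> inj_on abs S \<and>
                  (\<exists>a\<in>S. a > 0 \<and> (\<forall>b\<in>S. \<bar>b\<bar> \<le> \<bar>a\<bar>))}"

definition HB_V1 :: "(nat \<Rightarrow> real) \<Rightarrow> nat \<Rightarrow> nat \<Rightarrow> real set set" where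
  "HB_V1 x n k = {X. X \<subseteq> B_pos x n \<and> card X = k}"

definition HB_V2 :: "(nat \<Rightarrow> real) \<Rightarrow> nat \<Rightarrow> nat \<Rightarrow> real set set" where
  "HB_V2 x n k = phi_B x n - HB_V1 x n k"

definition HB_verts :: "(nat \<Rightarrow> real) \<Rightarrow> nat \<Rightarrow> nat \<Rightarrow> real set set" where
  "HB_verts x n k = HB_V1 x n k \<union> HB_V2 x n k"

definition HB_edges :: "(nat \<Rightarrow> real) \<Rightarrow> nat \<Rightarrow> nat \<Rightarrow> real set set set" where
  "HB_edges x n k = {{X, Y} | X Y. X \<in> HB_V1 x n k \<and> Y \<in> HB_V2 x n k \<and>
                        (X \<subseteq> abs ` Y \<or> abs ` Y \<subseteq> X)}"

definition graph_connected :: "'a set \<Rightarrow> 'a set set \<Rightarrow> bool" where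
  "graph_connected V E \<longleftrightarrow> V \<noteq> {} \<and>
     (\<forall>u\<in>V. \<forall>v\<in>V. (u, v) \<in> {(a, b). {a, b} \<in> E}\<^sup>*)"

definition circuit_rank :: "'a set \<Rightarrow> 'a set set \<Rightarrow> int" where
  "circuit_rank V E = int (card E) - int (card V) + 1"

end

theory Submission
  imports Defs
begin

lemma sum_pow_card:
  fixes f :: "nat \<Rightarrow> 'a::comm_semiring_1"
  assumes fin: "finite A"
  shows "(\<Sum>U\<in>Pow A - {{}}. f (card U)) = (\<Sum>i=1..card A. f i * of_nat (card A choose i))"
proof -
  have img: "card ` (Pow A - {{}}) \<subseteq> {1..card A}"
  proof
    fix i assume "i \<in> card ` (Pow A - {{}})"
    then obtain U where U: "U \<subseteq> A" "U \<noteq> {}" "i = card U" by auto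
    have "finite U" using U fin finite_subset by blast
    then show "i \<in> {1..card A}" using U fin card_mono[OF fin U(1)] by (auto simp: card_gt_0_iff Suc_le_eq)
  qed
  have "(\<Sum>U\<in>Pow A - {{}}. f (card U)) = (\<Sum>i\<in>{1..card A}. \<Sum>U\<in>{U. U \<in> Pow A - {{}} \<and> card U = i}. f (card U))"
    by (rule sum.group[symmetric]) (use fin img in auto)
  also have "\<dots> = (\<Sum>i=1..card A. f i * of_nat (card A choose i))"
  proof (rule sum.cong[OF refl])
    fix i assume i: "i \<in> {1..card A}"
    have eq: "{U. U \<in> Pow A - {{}} \<and> card U = i} = {U. U \<subseteq> A \<and> card U = i}"
      using i by auto
    have "(\<Sum>U\<in>{U. U \<in> Pow A - {{}} \<and> card U = i}. f (card U)) = (\<Sum>U\<in>{U. U \<subseteq> A \<and> card U = i}. f i)"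
      unfolding eq by (rule sum.cong) auto
    also have "\<dots> = f i * of_nat (card A choose i)"
      using n_subsets[OF fin, of i] by (simp add: mult.commute)
    finally show "(\<Sum>U\<in>{U. U \<in> Pow A - {{}} \<and> card U = i}. f (card U)) = f i * of_nat (card A choose i)" .
  qed
  finally show ?thesis .
qed

locale hbx =
  fixes x :: "nat \<Rightarrow> real" and n :: nat
  assumes n1: "n \<ge> 1" and x1: "0 < x 1"
    and xmono: "\<And>i j. 1 \<le> i \<Longrightarrow> i < j \<Longrightarrow> j \<le> n \<Longrightarrow> x i < x j"
begin

lemma xpos: "1 \<le> i \<Longrightarrow> i \<le> n \<Longrightarrow> 0 < x i"
  using x1 xmono[of 1 i] by (cases "i = 1") auto

lemma le_xn: "1 \<le> i \<Longrightarrow> i \<le> n \<Longrightarrow> x i \<le> x n"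
  using xmono[of i n] by (cases "i = n") auto

lemma xinj: "inj_on x {1..n}"
proof (rule inj_onI)
  fix i j assume "i \<in> {1..n}" "j \<in> {1..n}" "x i = x j"
  then show "i = j" using xmono[of i j] xmono[of j i]
    by (metis atLeastAtMost_iff less_irrefl linorder_neqE_nat)
qed

lemma P_eq: "B_pos x n = x ` {1..n}"
  unfolding B_pos_def by auto

lemma B_eq: "B_set x n = x ` {1..n} \<union> (\<lambda>i. - x i) ` {1..<n}"
  unfolding B_set_def by auto

lemma finP: "finite (B_pos x n)" by (simp add: P_eq)

lemma cardP: "card (B_pos x n) = n"
  using card_image[OF xinj] by (simp add: P_eq)

lemma finB: "finite (B_set x n)" by (simp add: B_eq)

lemma P_pos: "a \<in> B_pos x n \<Longrightarrow> 0 < a"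
  using xpos by (auto simp: P_eq)

lemma P_max: "a \<in> B_pos x n \<Longrightarrow> a \<le> x n"
  using le_xn by (auto simp: P_eq)

lemma P_sub_B: "B_pos x n \<subseteq> B_set x n"
  by (auto simp: P_eq B_eq)

lemma B_abs: assumes "y \<in> B_set x n" shows "\<bar>y\<bar> \<in> B_pos x n \<and> y \<noteq> 0"
proof -
  obtain i where i: "1 \<le> i" "i \<le> n" "y = x i \<or> y = - x i" using assms by (auto simp: B_eq)
  have "0 < x i" using xpos i by simp
  then have "\<bar>y\<bar> = x i" "y \<noteq> 0" using i by auto
  then show ?thesis using i by (auto simp: P_eq)
qed

lemma B_posP: "y \<in> B_set x n \<Longrightarrow> 0 < y \<Longrightarrow> y \<in> B_pos x n"
  using B_abs[of y] by simp

lemma neg_B: assumes "a \<in> B_pos x n" "a \<noteq> x n" shows "- a \<in> B_set x n"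
proof -
  obtain i where i: "1 \<le> i" "i \<le> n" "a = x i" using assms by (auto simp: P_eq)
  then have "i < n" using assms by (cases "i = n") auto
  then show ?thesis using i by (auto simp: B_eq)
qed

lemma phi_abs: "Y \<in> phi_B x n \<Longrightarrow> abs ` Y \<in> Pow (B_pos x n) - {{}}"
  unfolding phi_B_def using B_abs by auto

lemma fin_phi: "finite (phi_B x n)"
proof -
  have "phi_B x n \<subseteq> Pow (B_set x n)" unfolding phi_B_def by auto
  then show ?thesis by (rule finite_subset) (simp add: finB)
qed

lemma pos_in_phi:
  assumes T: "T \<subseteq> B_pos x n" "T \<noteq> {}"
  shows "T \<in> phi_B x n" "abs ` T = T"
proof -
  have finT: "finite T" using T finP finite_subset by blast
  have ab: "\<And>a. a \<in> T \<Longrightarrow> \<bar>a\<bar> = a" using T P_pos by force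
  show "abs ` T = T" using ab by force
  have "inj_on abs T" by (rule inj_onI) (simp add: ab)
  moreover have "Max T \<in> T" using finT T by simp
  moreover have "\<forall>b\<in>T. \<bar>b\<bar> \<le> \<bar>Max T\<bar>" using finT T ab \<open>Max T \<in> T\<close> by simp
  ultimately show "T \<in> phi_B x n" unfolding phi_B_def
    using T P_sub_B P_pos[of "Max T"] by blast
qed

end

context hbx
begin

lemma fiber_card:
  assumes S: "S \<subseteq> B_pos x n" "S \<noteq> {}"
  shows "card {Y \<in> phi_B x n. abs ` Y = S} = 2 ^ (card S - 1)"
proof -
  have finS: "finite S" using S finP finite_subset by blast
  define m where "m = Max S"
  have mS: "m \<in> S" using finS S by (simp add: m_def)
  have mmax: "\<And>a. a \<in> S \<Longrightarrow> a \<le> m" using finS by (simp add: m_def)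
  have Spos: "\<And>a. a \<in> S \<Longrightarrow> 0 < a" using S P_pos by blast
  define g where "g N = (S - N) \<union> uminus ` N" for N :: "real set"
  have inj: "inj_on g (Pow (S - {m}))"
  proof (rule inj_onI)
    fix N1 N2 assume N1: "N1 \<in> Pow (S - {m})" and N2: "N2 \<in> Pow (S - {m})" and eq: "g N1 = g N2"
    have sub: "Na \<subseteq> Nb" if "Na \<in> Pow (S - {m})" "Nb \<in> Pow (S - {m})" "g Na = g Nb" for Na Nb
    proof
      fix a assume a: "a \<in> Na"
      then have "- a \<in> g Nb" using that unfolding g_def by auto
      moreover have "0 < a" using a that Spos by auto
      ultimately show "a \<in> Nb" using Spos unfolding g_def by force
    qed
    show "N1 = N2" using sub[OF N1 N2 eq] sub[OF N2 N1 eq[symmetric]] by blast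
  qed
  have img: "{Y \<in> phi_B x n. abs ` Y = S} = g ` Pow (S - {m})"
  proof
    show "g ` Pow (S - {m}) \<subseteq> {Y \<in> phi_B x n. abs ` Y = S}"
    proof
      fix Y assume "Y \<in> g ` Pow (S - {m})"
      then obtain N where N: "N \<subseteq> S - {m}" and Y: "Y = g N" by auto
      have mY: "m \<in> Y" using N mS unfolding Y g_def by auto
      have negB: "- a \<in> B_set x n" if "a \<in> N" for a
      proof (rule neg_B)
        show "a \<in> B_pos x n" using that N S by auto
        show "a \<noteq> x n"
        proof
          assume "a = x n"
          then have "m \<le> a" using P_max mS S by auto
          then show False using mmax[of a] that N by auto
        qed
      qed
      have YB: "Y \<subseteq> B_set x n" unfolding Y g_def using S P_sub_B negB by auto
      have absY: "abs ` Y = S"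
      proof -
        have "abs ` (S - N) = S - N" using Spos by force
        moreover have "abs ` (uminus ` N) = N" using Spos N by (force simp: image_image)
        ultimately show ?thesis unfolding Y g_def image_Un using N by auto
      qed
      have injY: "inj_on abs Y"
      proof (rule inj_onI)
        fix a b assume a: "a \<in> Y" and b: "b \<in> Y" and ab: "\<bar>a\<bar> = \<bar>b\<bar>"
        show "a = b"
        proof (cases "0 < a")
          case True
          then have aSN: "a \<in> S - N" using a Spos N unfolding Y g_def by force
          show ?thesis
          proof (cases "0 < b")
            case True then show ?thesis using ab \<open>0 < a\<close> by simp
          next
            case False
            then obtain c where "c \<in> N" "b = - c" using b Spos unfolding Y g_def by force
            then show ?thesis using ab aSN Spos N \<open>0 < a\<close> by auto
          qed
        next
          case False
          then obtain c where c: "c \<in> N" "a = - c" using a Spos unfolding Y g_def by force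
          show ?thesis
          proof (cases "0 < b")
            case True
            then have "b \<in> S - N" using b Spos N unfolding Y g_def by force
            then show ?thesis using ab c Spos N True by auto
          next
            case False
            then obtain d where d: "d \<in> N" "b = - d" using b Spos unfolding Y g_def by force
            have "0 < c" "0 < d" using c d N Spos by auto
            then show ?thesis using ab c d by simp
          qed
        qed
      qed
      have "\<forall>b\<in>Y. \<bar>b\<bar> \<le> \<bar>m\<bar>"
      proof
        fix b assume "b \<in> Y"
        then have "\<bar>b\<bar> \<in> S" using absY by auto
        then show "\<bar>b\<bar> \<le> \<bar>m\<bar>" using mmax mS Spos by force
      qed
      then show "Y \<in> {Y \<in> phi_B x n. abs ` Y = S}"
        unfolding phi_B_def using YB mY injY absY Spos[OF mS] by blast
    qed
  next
    show "{Y \<in> phi_B x n. abs ` Y = S} \<subseteq> g ` Pow (S - {m})"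
    proof
      fix Y assume "Y \<in> {Y \<in> phi_B x n. abs ` Y = S}"
      then have YB: "Y \<subseteq> B_set x n" and injY: "inj_on abs Y" and absY: "abs ` Y = S"
        and ex: "\<exists>a\<in>Y. a > 0 \<and> (\<forall>b\<in>Y. \<bar>b\<bar> \<le> \<bar>a\<bar>)"
        unfolding phi_B_def by auto
      have nz: "\<And>y. y \<in> Y \<Longrightarrow> y \<noteq> 0" using YB B_abs by blast
      define N where "N = uminus ` {y \<in> Y. y < 0}"
      have NS: "N \<subseteq> S" unfolding N_def absY[symmetric] by force
      obtain a where a: "a \<in> Y" "a > 0" "\<forall>b\<in>Y. \<bar>b\<bar> \<le> \<bar>a\<bar>" using ex by blast
      have "a \<in> S" using a absY by force
      have "m \<le> a" using mS absY a by force
      then have am: "a = m" using mmax[OF \<open>a \<in> S\<close>] by simp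
      have "m \<notin> N"
      proof
        assume "m \<in> N"
        then have "- a \<in> Y" using am unfolding N_def by force
        then have "- a = a" using inj_onD[OF injY _ _ a(1), of "- a"] by simp
        then show False using a by simp
      qed
      then have N: "N \<subseteq> S - {m}" using NS by auto
      have "Y = g N"
      proof
        show "Y \<subseteq> g N"
        proof
          fix y assume y: "y \<in> Y"
          show "y \<in> g N"
          proof (cases "y < 0")
            case True then have "- y \<in> N" unfolding N_def using y by force
            then show ?thesis unfolding g_def by force
          next
            case False
            then have "0 < y" using nz y by force
            have yS: "y \<in> S" using y absY \<open>0 < y\<close> by force
            have "y \<notin> N"
            proof
              assume "y \<in> N"
              then have "- y \<in> Y" unfolding N_def by force
              then have "- y = y" using inj_onD[OF injY _ _ y, of "- y"] by simp
              then show False using \<open>0 < y\<close> by simp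
            qed
            then show ?thesis using yS unfolding g_def by auto
          qed
        qed
      next
        show "g N \<subseteq> Y"
        proof
          fix y assume "y \<in> g N"
          then consider "y \<in> S" "y \<notin> N" | "y \<in> uminus ` N" unfolding g_def by auto
          then show "y \<in> Y"
          proof cases
            case 1
            then obtain z where z: "z \<in> Y" "y = \<bar>z\<bar>" using absY by force
            show ?thesis
            proof (cases "z < 0")
              case True then have "y \<in> N" using z unfolding N_def by force
              then show ?thesis using 1 by simp
            next
              case False then show ?thesis using z by simp
            qed
          next
            case 2 then show ?thesis unfolding N_def by force
          qed
        qed
      qed
      then show "Y \<in> g ` Pow (S - {m})" using N by blast
    qed
  qed
  have "card {Y \<in> phi_B x n. abs ` Y = S} = card (Pow (S - {m}))"
    unfolding img by (rule card_image[OF inj])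
  also have "\<dots> = 2 ^ (card S - 1)" using finS mS by (simp add: card_Pow)
  finally show ?thesis .
qed

lemma count_phi:
  assumes T: "\<T> \<subseteq> Pow (B_pos x n) - {{}}"
  shows "int (card {Y \<in> phi_B x n. abs ` Y \<in> \<T>}) = (\<Sum>S\<in>\<T>. (2::int) ^ (card S - 1))"
proof -
  let ?A = "{Y \<in> phi_B x n. abs ` Y \<in> \<T>}"
  have finA: "finite ?A" using fin_phi by simp
  have finT: "finite \<T>" using T finP by (meson finite_Diff finite_Pow_iff finite_subset)
  have "card ?A = (\<Sum>S\<in>\<T>. card {Y. Y \<in> ?A \<and> abs ` Y = S})"
  proof -
    have "(\<lambda>Y. abs ` Y) ` ?A \<subseteq> \<T>" by auto
    from sum.group[OF finA finT this, of "\<lambda>_. 1::nat"] show ?thesis by simp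
  qed
  also have "\<dots> = (\<Sum>S\<in>\<T>. 2 ^ (card S - 1))"
  proof (rule sum.cong[OF refl])
    fix S assume "S \<in> \<T>"
    then have "{Y. Y \<in> ?A \<and> abs ` Y = S} = {Y \<in> phi_B x n. abs ` Y = S}" by auto
    then show "card {Y. Y \<in> ?A \<and> abs ` Y = S} = 2 ^ (card S - 1)"
    proof -
      have "S \<subseteq> B_pos x n" "S \<noteq> {}" using \<open>S \<in> \<T>\<close> T by auto
      from fiber_card[OF this] show ?thesis using \<open>{Y. Y \<in> ?A \<and> abs ` Y = S} = {Y \<in> phi_B x n. abs ` Y = S}\<close> by simp
    qed
  qed
  finally show ?thesis by simp
qed

end

context hbx
begin

lemma adj_count:
  assumes X: "X \<subseteq> B_pos x n" "card X = k" "1 \<le> k"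
  shows "int (card {Y \<in> HB_V2 x n k. X \<subseteq> abs ` Y \<or> abs ` Y \<subseteq> X}) =
     (\<Sum>s=1..k. 2^(s-1) * int (k choose s)) - 1
              + (\<Sum>t=1..card (B_pos x n) - k. 2^(k+t-1) * int ((card (B_pos x n) - k) choose t))"
proof -
  let ?P = "B_pos x n"
  have finX: "finite X" using X finP finite_subset by blast
  have Xne: "X \<noteq> {}" using X by auto
  have Xphi: "X \<in> phi_B x n" and absX: "abs ` X = X" using pos_in_phi[OF X(1) Xne] by auto
  define T1 where "T1 = Pow X - {{}}"
  define T2 where "T2 = (\<lambda>U. X \<union> U) ` (Pow (?P - X) - {{}})"
  have finT1: "finite T1" using finX by (simp add: T1_def)
  have finT2: "finite T2" using finP by (simp add: T2_def)
  have disj: "T1 \<inter> T2 = {}"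
  proof -
    have "\<not> (X \<union> U \<subseteq> X)" if "U \<in> Pow (?P - X) - {{}}" for U using that by auto
    then show ?thesis unfolding T1_def T2_def by blast
  qed
  have Tsub: "T1 \<union> T2 \<subseteq> Pow ?P - {{}}" unfolding T1_def T2_def using X by auto
  have setEq: "{Y \<in> HB_V2 x n k. X \<subseteq> abs ` Y \<or> abs ` Y \<subseteq> X} = {Y \<in> phi_B x n. abs ` Y \<in> T1 \<union> T2} - {X}"
  proof
    show "{Y \<in> HB_V2 x n k. X \<subseteq> abs ` Y \<or> abs ` Y \<subseteq> X} \<subseteq> {Y \<in> phi_B x n. abs ` Y \<in> T1 \<union> T2} - {X}"
    proof
      fix Y assume "Y \<in> {Y \<in> HB_V2 x n k. X \<subseteq> abs ` Y \<or> abs ` Y \<subseteq> X}"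
      then have Y: "Y \<in> phi_B x n" "Y \<notin> HB_V1 x n k" and c: "X \<subseteq> abs ` Y \<or> abs ` Y \<subseteq> X"
        unfolding HB_V2_def by auto
      have YX: "Y \<noteq> X" using Y X unfolding HB_V1_def by auto
      have T: "abs ` Y \<in> Pow ?P - {{}}" using phi_abs[OF Y(1)] .
      have "abs ` Y \<in> T1 \<union> T2"
      proof (cases "abs ` Y \<subseteq> X")
        case True then show ?thesis using T unfolding T1_def by auto
      next
        case False
        then have sub: "X \<subseteq> abs ` Y" using c by auto
        show ?thesis
        proof (cases "abs ` Y - X = {}")
          case True then show ?thesis using False by auto
        next
          case False
          have "abs ` Y = X \<union> (abs ` Y - X)" using sub by auto
          moreover have "abs ` Y - X \<in> Pow (?P - X) - {{}}" using T False by auto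
          ultimately show ?thesis unfolding T2_def by blast
        qed
      qed
      then show "Y \<in> {Y \<in> phi_B x n. abs ` Y \<in> T1 \<union> T2} - {X}" using Y YX by auto
    qed
  next
    show "{Y \<in> phi_B x n. abs ` Y \<in> T1 \<union> T2} - {X} \<subseteq> {Y \<in> HB_V2 x n k. X \<subseteq> abs ` Y \<or> abs ` Y \<subseteq> X}"
    proof
      fix Y assume "Y \<in> {Y \<in> phi_B x n. abs ` Y \<in> T1 \<union> T2} - {X}"
      then have Y: "Y \<in> phi_B x n" "abs ` Y \<in> T1 \<union> T2" "Y \<noteq> X" by auto
      have c: "X \<subseteq> abs ` Y \<or> abs ` Y \<subseteq> X" using Y(2) unfolding T1_def T2_def by auto
      have "Y \<notin> HB_V1 x n k"
      proof
        assume V1: "Y \<in> HB_V1 x n k"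
        then have YP: "Y \<subseteq> ?P" "card Y = k" unfolding HB_V1_def by auto
        have finY: "finite Y" using YP finP finite_subset by blast
        have "abs ` Y = Y" using pos_in_phi(2)[OF YP(1)] YP X by auto
        then have "X \<subseteq> Y \<or> Y \<subseteq> X" using c by simp
        then have "Y = X" using card_subset_eq[OF finY, of X] card_subset_eq[OF finX, of Y] YP X by auto
        then show False using Y by simp
      qed
      then show "Y \<in> {Y \<in> HB_V2 x n k. X \<subseteq> abs ` Y \<or> abs ` Y \<subseteq> X}"
        using Y c unfolding HB_V2_def by auto
    qed
  qed
  have Xin: "X \<in> {Y \<in> phi_B x n. abs ` Y \<in> T1 \<union> T2}" using Xphi absX Xne unfolding T1_def by auto
  have "int (card {Y \<in> HB_V2 x n k. X \<subseteq> abs ` Y \<or> abs ` Y \<subseteq> X})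
        = int (card {Y \<in> phi_B x n. abs ` Y \<in> T1 \<union> T2}) - 1"
  proof -
    have "finite {Y \<in> phi_B x n. abs ` Y \<in> T1 \<union> T2}" using fin_phi by simp
    then have "card {Y \<in> phi_B x n. abs ` Y \<in> T1 \<union> T2} \<ge> 1"
      using Xin by (metis One_nat_def Suc_leI card_gt_0_iff empty_iff)
    then show ?thesis unfolding setEq using card_Diff_singleton[OF Xin] by simp
  qed
  also have "\<dots> = (\<Sum>S\<in>T1 \<union> T2. (2::int) ^ (card S - 1)) - 1"
    using count_phi[OF Tsub] by simp
  also have "\<dots> = (\<Sum>S\<in>T1. (2::int) ^ (card S - 1)) + (\<Sum>S\<in>T2. (2::int) ^ (card S - 1)) - 1"
    using sum.union_disjoint[OF finT1 finT2 disj] by simp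
  also have "(\<Sum>S\<in>T1. (2::int) ^ (card S - 1)) = (\<Sum>s=1..k. 2^(s-1) * int (k choose s))"
    unfolding T1_def using sum_pow_card[OF finX, of "\<lambda>i. (2::int) ^ (i - 1)"] X by simp
  also have "(\<Sum>S\<in>T2. (2::int) ^ (card S - 1)) = (\<Sum>t=1..card ?P - k. 2^(k+t-1) * int ((card ?P - k) choose t))"
  proof -
    have inj: "inj_on (\<lambda>U. X \<union> U) (Pow (?P - X) - {{}})"
    proof (rule inj_onI)
      fix U V assume "U \<in> Pow (?P - X) - {{}}" "V \<in> Pow (?P - X) - {{}}" "X \<union> U = X \<union> V"
      then show "U = V" by blast
    qed
    have "(\<Sum>S\<in>T2. (2::int) ^ (card S - 1)) = (\<Sum>U\<in>Pow (?P - X) - {{}}. (2::int) ^ (card (X \<union> U) - 1))"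
      unfolding T2_def by (simp add: sum.reindex[OF inj])
    also have "\<dots> = (\<Sum>U\<in>Pow (?P - X) - {{}}. (2::int) ^ (k + card U - 1))"
    proof (rule sum.cong[OF refl])
      fix U assume U: "U \<in> Pow (?P - X) - {{}}"
      have "finite U" using U finP finite_subset by auto
      then have "card (X \<union> U) = k + card U" using card_Un_disjoint[OF finX] U X by auto
      then show "(2::int) ^ (card (X \<union> U) - 1) = 2 ^ (k + card U - 1)" by simp
    qed
    also have "\<dots> = (\<Sum>t=1..card (?P - X). 2^(k+t-1) * int (card (?P - X) choose t))"
      using sum_pow_card[of "?P - X" "\<lambda>t. (2::int) ^ (k + t - 1)"] finP by simp
    also have "card (?P - X) = card ?P - k" using card_Diff_subset[OF finX X(1)] X by simp
    finally show ?thesis .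
  qed
  finally show ?thesis by simp
qed

end

theorem mainTheorem9:
  fixes x :: "nat \<Rightarrow> real" and n k :: nat
  assumes "n \<ge> 2" and "1 \<le> k" and "k < n"
    and "0 < x 1"
    and "\<And>i j. 1 \<le> i \<Longrightarrow> i < j \<Longrightarrow> j \<le> n \<Longrightarrow> x i < x j"
  shows "graph_connected (HB_verts x n k) (HB_edges x n k) \<and>
         circuit_rank (HB_verts x n k) (HB_edges x n k) =
           int (n choose k) *
             ((\<Sum>s=1..k. 2^(s-1) * int (k choose s)) - 1
              + (\<Sum>t=1..n-k. 2^(k+t-1) * int ((n-k) choose t)))
           - (\<Sum>i=1..n. 2^(i-1) * int (n choose i)) + 1"
proof -
  interpret hbx x n using assms by unfold_locales auto
  let ?P = "B_pos x n"
  let ?phi = "phi_B x n"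
  let ?V1 = "HB_V1 x n k"
  let ?V2 = "HB_V2 x n k"
  let ?V = "HB_verts x n k"
  let ?E = "HB_edges x n k"
  have V1_eq: "?V1 = {X. X \<subseteq> ?P \<and> card X = k}" by (simp add: HB_V1_def)
  have V1_phi: "X \<in> ?phi" "abs ` X = X" if "X \<in> ?V1" for X
  proof -
    have "X \<subseteq> ?P" "card X = k" using that V1_eq by auto
    then have "X \<noteq> {}" using assms(2) by auto
    then show "X \<in> ?phi" "abs ` X = X" using pos_in_phi \<open>X \<subseteq> ?P\<close> by auto
  qed
  have V_eq: "?V = ?phi" unfolding HB_verts_def HB_V2_def using V1_phi by auto
  have cardV1: "card ?V1 = n choose k" using n_subsets[OF finP, of k] cardP V1_eq by simp
  have finV1: "finite ?V1" using V1_eq finP by (simp add: finite_subset)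
  define adj where "adj X = {Y \<in> ?V2. X \<subseteq> abs ` Y \<or> abs ` Y \<subseteq> X}" for X
  have fin_adj: "finite (adj X)" for X
    using fin_phi unfolding adj_def HB_V2_def by simp
  have E_eq: "?E = (\<lambda>(X,Y). {X,Y}) ` (SIGMA X:?V1. adj X)" unfolding HB_edges_def adj_def by auto
  have inj: "inj_on (\<lambda>(X,Y). {X,Y}) (SIGMA X:?V1. adj X)"
  proof (rule inj_onI)
    fix p q assume p: "p \<in> (SIGMA X:?V1. adj X)" and q: "q \<in> (SIGMA X:?V1. adj X)"
      and eq: "(\<lambda>(X,Y). {X,Y}) p = (\<lambda>(X,Y). {X,Y}) q"
    obtain X Y where pXY: "p = (X,Y)" by (cases p)
    obtain X' Y' where qXY: "q = (X',Y')" by (cases q)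
    have h: "X \<in> ?V1" "Y \<notin> ?V1" "X' \<in> ?V1" "Y' \<notin> ?V1"
      using p q pXY qXY unfolding adj_def HB_V2_def by auto
    have e: "{X,Y} = {X',Y'}" using eq pXY qXY by simp
    then have "X = X'" using h by (metis doubleton_eq_iff)
    moreover then have "Y = Y'" using e h by (metis doubleton_eq_iff)
    ultimately show "p = q" using pXY qXY by simp
  qed
  define c where "c = (\<Sum>s=1..k. 2^(s-1) * int (k choose s)) - 1
              + (\<Sum>t=1..n-k. 2^(k+t-1) * int ((n-k) choose t))"
  have adj_card: "int (card (adj X)) = c" if "X \<in> ?V1" for X
    using adj_count[of X k] that V1_eq assms(2) cardP unfolding adj_def c_def by simp
  have cardE: "int (card ?E) = int (n choose k) * c"
  proof -
    have "card ?E = card (SIGMA X:?V1. adj X)" unfolding E_eq by (rule card_image[OF inj])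
    also have "\<dots> = (\<Sum>X\<in>?V1. card (adj X))" using finV1 fin_adj by simp
    finally have "int (card ?E) = (\<Sum>X\<in>?V1. int (card (adj X)))" by simp
    also have "\<dots> = (\<Sum>X\<in>?V1. c)" using adj_card by simp
    also have "\<dots> = int (n choose k) * c" using cardV1 by simp
    finally show ?thesis .
  qed
  have cardV: "int (card ?V) = (\<Sum>i=1..n. 2^(i-1) * int (n choose i))"
  proof -
    have "?phi = {Y \<in> ?phi. abs ` Y \<in> Pow ?P - {{}}}" using phi_abs by auto
    then have "int (card ?V) = (\<Sum>S\<in>Pow ?P - {{}}. (2::int) ^ (card S - 1))"
      using count_phi[of "Pow ?P - {{}}"] V_eq by simp
    also have "\<dots> = (\<Sum>i=1..n. 2^(i-1) * int (n choose i))"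
      using sum_pow_card[OF finP, of "\<lambda>i. (2::int) ^ (i - 1)"] cardP by simp
    finally show ?thesis .
  qed
  have rank: "circuit_rank ?V ?E = int (n choose k) * c - (\<Sum>i=1..n. 2^(i-1) * int (n choose i)) + 1"
    unfolding circuit_rank_def using cardE cardV by simp
  define R where "R = {(a, b). {a, b} \<in> ?E}"
  have symR: "sym R" unfolding R_def sym_def by (simp add: insert_commute)
  have edgeR: "(X, Y) \<in> R" if "X \<in> ?V1" "Y \<in> ?V2" "X \<subseteq> abs ` Y \<or> abs ` Y \<subseteq> X" for X Y
  proof -
    have "{X,Y} \<in> ?E" unfolding HB_edges_def using that by blast
    then show ?thesis unfolding R_def by simp
  qed
  have symS: "(b, a) \<in> R\<^sup>*" if "(a, b) \<in> R\<^sup>*" for a b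
    using sym_rtrancl[OF symR] that unfolding sym_def by blast
  have toV1: "\<exists>X\<in>?V1. (X, v) \<in> R\<^sup>*" if v: "v \<in> ?V" for v
  proof (cases "v \<in> ?V1")
    case True then show ?thesis by blast
  next
    case False
    then have vV2: "v \<in> ?V2" using v unfolding HB_verts_def by auto
    then have "v \<in> ?phi" unfolding HB_V2_def by auto
    then have T: "abs ` v \<subseteq> ?P" "abs ` v \<noteq> {}" using phi_abs by auto
    have finT: "finite (abs ` v)" using T finP finite_subset by blast
    obtain X where X: "X \<in> ?V1" "X \<subseteq> abs ` v \<or> abs ` v \<subseteq> X"
    proof (cases "k \<le> card (abs ` v)")
      case True
      then obtain X where X: "X \<subseteq> abs ` v" "card X = k" by (meson obtain_subset_with_card_n)
      then have "X \<in> ?V1" using T V1_eq by auto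
      then show ?thesis using that X by blast
    next
      case False
      have "card (?P - abs ` v) = n - card (abs ` v)" using card_Diff_subset[OF finT T(1)] cardP by simp
      then have "k - card (abs ` v) \<le> card (?P - abs ` v)" using False assms(3) by simp
      then obtain W where W: "W \<subseteq> ?P - abs ` v" "card W = k - card (abs ` v)" "finite W"
        by (meson obtain_subset_with_card_n)
      have "card (abs ` v \<union> W) = k" using card_Un_disjoint[OF finT W(3)] W False by auto
      then have "abs ` v \<union> W \<in> ?V1" using V1_eq W T by auto
      then show ?thesis using that by blast
    qed
    then have "(X, v) \<in> R" using edgeR vV2 by blast
    then show ?thesis using X by blast
  qed
  have V1conn: "(X, X') \<in> R\<^sup>*" if X: "X \<in> ?V1" and X': "X' \<in> ?V1" for X X'
  proof (cases "X = X'")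
    case True then show ?thesis by simp
  next
    case False
    have XP: "X \<subseteq> ?P" "card X = k" "X' \<subseteq> ?P" "card X' = k" using X X' V1_eq by auto
    have finX: "finite X" using XP finP finite_subset by blast
    have finX': "finite X'" using XP finP finite_subset by blast
    let ?Y = "X \<union> X'"
    have Ysub: "?Y \<subseteq> ?P" "?Y \<noteq> {}" using XP assms(2) by auto
    have Yphi: "?Y \<in> ?phi" and absY: "abs ` ?Y = ?Y" using pos_in_phi[OF Ysub] by auto
    have "?Y \<notin> ?V1"
    proof
      assume "?Y \<in> ?V1"
      then have "card ?Y = k" using V1_eq by auto
      then have "X = ?Y" "X' = ?Y"
        using card_subset_eq[OF _ _ ] finX finX' XP
        by (metis Un_upper1 Un_upper2 finite_UnI)+
      then show False using False by simp
    qed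
    then have YV2: "?Y \<in> ?V2" using Yphi unfolding HB_V2_def by auto
    have "(X, ?Y) \<in> R" using edgeR[OF X YV2] absY by simp
    moreover have "(X', ?Y) \<in> R" using edgeR[OF X' YV2] absY by simp
    ultimately show ?thesis using symS by (meson r_into_rtrancl rtrancl_trans)
  qed
  have conn: "graph_connected ?V ?E"
    unfolding graph_connected_def
  proof (intro conjI ballI)
    obtain X where "X \<subseteq> ?P" "card X = k" using obtain_subset_with_card_n[of k ?P] cardP assms(3) by auto
    then have "X \<in> ?V" using V1_eq unfolding HB_verts_def by auto
    then show "?V \<noteq> {}" by auto
  next
    fix u v assume u: "u \<in> ?V" and v: "v \<in> ?V"
    obtain Xu where Xu: "Xu \<in> ?V1" "(Xu, u) \<in> R\<^sup>*" using toV1[OF u] by blast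
    obtain Xv where Xv: "Xv \<in> ?V1" "(Xv, v) \<in> R\<^sup>*" using toV1[OF v] by blast
    have "(u, v) \<in> R\<^sup>*" using symS[OF Xu(2)] V1conn[OF Xu(1) Xv(1)] Xv(2) by (meson rtrancl_trans)
    then show "(u, v) \<in> {(a, b). {a, b} \<in> ?E}\<^sup>*" unfolding R_def .
  qed
  show ?thesis using conn rank unfolding c_def by simp
qed

end
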